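(* Let $G$ be a game and let $H$ be the game obtained from $G$ by removing a dominated option (a Left option $G^{L_1}$ for which some other Left option $G^{L_2}$ satisfies $G^{L_1}\le G^{L_2}$, or a Right option $G^{R_1}$ for which some other Right option $G^{R_2}$ satisfies $G^{R_2}\le G^{R_1}$). Then $G \triangleq H$.
   Context: Games are short (finite) normal-play combinatorial games between players Left and Right, written $G\cong\{L(G)\mid R(G)\}$, where $\cong$ denotes identity of literal forms (game trees) and $L(G),R(G)$ are the sets of Left and Right options. The disjunctive sum is $G+H\cong\{L(G)+H,\,G+L(H)\mid R(G)+H,\,G+R(H)\}$, negation is $-G\cong\{-R(G)\mid -L(G)\}$, and $G-H$ means $G+(-H)$; $\le$ and $=$ are the usual partial order and equality of game values ($G\le H$ iff Left wins $H-G$ when Right moves first). Equivalence modulo domination: $G\triangleq H$ means that in $G+(-H)$, for every move by either player (as first player) in one of the two summands, the other player has a response in the other summand after which the responding player wins (with the first player to move next). *)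

theory Defs
  imports Main "HOL-Library.FSet"
begin

text \<open>Short games as finite game trees (literal forms): finite sets of Left and Right options.\<close>
datatype game = Game (lopts: "game fset") (ropts: "game fset")

text \<open>Outcome under optimal play (normal play): first component = Left wins moving first,
  second component = Right wins moving first.\<close>
primrec outc :: "game \<Rightarrow> bool \<times> bool" where
  "outc (Game L R) =
     (fBex (fimage outc L) (\<lambda>p. \<not> snd p), fBex (fimage outc R) (\<lambda>p. \<not> fst p))"

definition lfirst :: "game \<Rightarrow> bool" where "lfirst G = fst (outc G)"
definition rfirst :: "game \<Rightarrow> bool" where "rfirst G = snd (outc G)"

definition lwins_second :: "game \<Rightarrow> bool" where "lwins_second G = (\<not> rfirst G)"
definition rwins_second :: "game \<Rightarrow> bool" where "rwins_second G = (\<not> lfirst G)"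

primrec neg :: "game \<Rightarrow> game" where
  "neg (Game L R) = Game (fimage neg R) (fimage neg L)"

lemma size_lopt: "x |\<in>| L \<Longrightarrow> size x < size (Game L R)"
  by (induction L) (auto simp: size_fset_simps)

lemma size_ropt: "x |\<in>| R \<Longrightarrow> size x < size (Game L R)"
  by (induction R) (auto simp: size_fset_simps)

function gsum :: "game \<Rightarrow> game \<Rightarrow> game" where
  "gsum (Game GL GR) (Game HL HR) =
     Game (fimage (\<lambda>X. gsum X (Game HL HR)) GL |\<union>| fimage (\<lambda>Y. gsum (Game GL GR) Y) HL)
          (fimage (\<lambda>X. gsum X (Game HL HR)) GR |\<union>| fimage (\<lambda>Y. gsum (Game GL GR) Y) HR)"
  by pat_completeness auto
termination
  by (relation "measure (\<lambda>(g, h). size g + size h)")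
     (auto dest: size_lopt size_ropt)

definition gdiff :: "game \<Rightarrow> game \<Rightarrow> game" where "gdiff G H = gsum G (neg H)"

definition gle :: "game \<Rightarrow> game \<Rightarrow> bool" where "gle G H = lwins_second (gdiff H G)"

text \<open>Equivalence modulo domination, G \<triangleq> H, read off the summands of G + (-H).\<close>
definition dom_equiv :: "game \<Rightarrow> game \<Rightarrow> bool" where
  "dom_equiv G H \<longleftrightarrow>
     (\<forall>X |\<in>| lopts G. \<exists>Y |\<in>| ropts (neg H). rwins_second (gsum X Y)) \<and>
     (\<forall>Y |\<in>| lopts (neg H). \<exists>X |\<in>| ropts G. rwins_second (gsum X Y)) \<and>
     (\<forall>X |\<in>| ropts G. \<exists>Y |\<in>| lopts (neg H). lwins_second (gsum X Y)) \<and>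
     (\<forall>Y |\<in>| ropts (neg H). \<exists>X |\<in>| lopts G. lwins_second (gsum X Y))"

end

theory Submission
  imports Defs
begin

lemma lfirst_Game: "lfirst (Game L R) \<longleftrightarrow> (\<exists>x|\<in>|L. \<not> rfirst x)"
  by (auto simp: lfirst_def rfirst_def)

lemma rfirst_Game: "rfirst (Game L R) \<longleftrightarrow> (\<exists>x|\<in>|R. \<not> lfirst x)"
  by (auto simp: lfirst_def rfirst_def)

lemma lopts_gsum: "lopts (gsum X Y) = fimage (\<lambda>A. gsum A Y) (lopts X) |\<union>| fimage (gsum X) (lopts Y)"
  by (cases X; cases Y) simp

lemma ropts_gsum: "ropts (gsum X Y) = fimage (\<lambda>A. gsum A Y) (ropts X) |\<union>| fimage (gsum X) (ropts Y)"
  by (cases X; cases Y) simp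

lemma lopts_neg: "lopts (neg X) = fimage neg (ropts X)"
  by (cases X) simp

lemma ropts_neg: "ropts (neg X) = fimage neg (lopts X)"
  by (cases X) simp

lemma lfirst_gm: "lfirst X \<longleftrightarrow> (\<exists>x|\<in>|lopts X. \<not> rfirst x)"
  by (cases X) (simp add: lfirst_Game)

lemma rfirst_gm: "rfirst X \<longleftrightarrow> (\<exists>x|\<in>|ropts X. \<not> lfirst x)"
  by (cases X) (simp add: rfirst_Game)

lemma neg_gsum: "neg (gsum A B) = gsum (neg A) (neg B)"
  by (induction A B rule: gsum.induct) (auto simp: fimage_funion fset.map_comp o_def)

lemma gsum_comm: "gsum A B = gsum B A"
  by (induction A B rule: gsum.induct) (auto simp: funion_commute)

lemma neg_neg[simp]: "neg (neg X) = X"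
  by (induction X) (auto simp: fset.map_comp o_def fset.map_ident_strong)

lemma neg_first: "lfirst (neg X) = rfirst X \<and> rfirst (neg X) = lfirst X"
proof (induction X)
  case (Game L R)
  then show ?case by (auto simp: lfirst_Game rfirst_Game)
qed

lemma mirror: "\<not> lfirst (gsum X (neg X)) \<and> \<not> rfirst (gsum X (neg X))"
proof (induction X)
  case (Game L R)
  have A: "rfirst (gsum A (neg (Game L R)))" if "A |\<in>| L" for A
  proof -
    have "neg A |\<in>| ropts (neg (Game L R))" using that by simp
    then have "gsum A (neg A) |\<in>| ropts (gsum A (neg (Game L R)))" using that by (force simp: ropts_gsum)
    moreover have "\<not> lfirst (gsum A (neg A))" using Game that by auto
    ultimately show ?thesis by (auto simp: rfirst_gm)
  qed
  have B: "rfirst (gsum (Game L R) (neg B))" if "B |\<in>| R" for B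
  proof -
    have "gsum B (neg B) |\<in>| ropts (gsum (Game L R) (neg B))" using that by (simp add: ropts_gsum)
    moreover have "\<not> lfirst (gsum B (neg B))" using Game that by auto
    ultimately show ?thesis by (auto simp: rfirst_gm)
  qed
  have C: "lfirst (gsum A (neg (Game L R)))" if "A |\<in>| R" for A
  proof -
    have "neg A |\<in>| lopts (neg (Game L R))" using that by simp
    then have "gsum A (neg A) |\<in>| lopts (gsum A (neg (Game L R)))" using that by (force simp: lopts_gsum)
    moreover have "\<not> rfirst (gsum A (neg A))" using Game that by auto
    ultimately show ?thesis by (auto simp: lfirst_gm)
  qed
  have D: "lfirst (gsum (Game L R) (neg B))" if "B |\<in>| L" for B
  proof -
    have "gsum B (neg B) |\<in>| lopts (gsum (Game L R) (neg B))" using that by (simp add: lopts_gsum)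
    moreover have "\<not> rfirst (gsum B (neg B))" using Game that by auto
    ultimately show ?thesis by (auto simp: lfirst_gm)
  qed
  show ?case
    apply (simp only: lfirst_gm[of "gsum (Game L R) (neg (Game L R))"]
                      rfirst_gm[of "gsum (Game L R) (neg (Game L R))"] lopts_gsum ropts_gsum)
    using A B C D by (auto simp: lopts_neg ropts_neg)
qed

lemma gle_swap: "gle A B \<Longrightarrow> \<not> lfirst (gsum A (neg B))"
proof -
  assume "gle A B"
  then have "\<not> rfirst (gsum B (neg A))" by (simp add: gle_def gdiff_def lwins_second_def)
  moreover have "gsum A (neg B) = neg (gsum B (neg A))"
    by (simp add: neg_gsum gsum_comm)
  ultimately show ?thesis using neg_first by metis
qed

theorem lemma2p1:
  fixes G H :: game
  assumes "(\<exists>GL1 GL2. GL1 |\<in>| lopts G \<and> GL2 |\<in>| lopts G \<and> GL1 \<noteq> GL2 \<and> gle GL1 GL2 \<and>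
              H = Game (lopts G |-| {|GL1|}) (ropts G))
         \<or> (\<exists>GR1 GR2. GR1 |\<in>| ropts G \<and> GR2 |\<in>| ropts G \<and> GR1 \<noteq> GR2 \<and> gle GR2 GR1 \<and>
              H = Game (lopts G) (ropts G |-| {|GR1|}))"
  shows "dom_equiv G H"
  using assms
proof
  assume "\<exists>GL1 GL2. GL1 |\<in>| lopts G \<and> GL2 |\<in>| lopts G \<and> GL1 \<noteq> GL2 \<and> gle GL1 GL2 \<and>
              H = Game (lopts G |-| {|GL1|}) (ropts G)"
  then obtain GL1 GL2 where h: "GL1 |\<in>| lopts G" "GL2 |\<in>| lopts G" "GL1 \<noteq> GL2" "gle GL1 GL2"
     "H = Game (lopts G |-| {|GL1|}) (ropts G)" by blast
  have 1: "\<exists>Y |\<in>| ropts (neg H). rwins_second (gsum X Y)" if "X |\<in>| lopts G" for X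
  proof (cases "X = GL1")
    case True
    then show ?thesis using h gle_swap[OF h(4)] by (auto simp: rwins_second_def)
  next
    case False
    then show ?thesis using h that mirror by (auto simp: rwins_second_def)
  qed
  show ?thesis unfolding dom_equiv_def
    using 1 h mirror by (auto simp: rwins_second_def lwins_second_def)
next
  assume "\<exists>GR1 GR2. GR1 |\<in>| ropts G \<and> GR2 |\<in>| ropts G \<and> GR1 \<noteq> GR2 \<and> gle GR2 GR1 \<and>
              H = Game (lopts G) (ropts G |-| {|GR1|})"
  then obtain GR1 GR2 where h: "GR1 |\<in>| ropts G" "GR2 |\<in>| ropts G" "GR1 \<noteq> GR2" "gle GR2 GR1"
     "H = Game (lopts G) (ropts G |-| {|GR1|})" by blast
  have 1: "\<exists>Y |\<in>| lopts (neg H). lwins_second (gsum X Y)" if "X |\<in>| ropts G" for X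
  proof (cases "X = GR1")
    case True
    then show ?thesis using h by (auto simp: lwins_second_def gle_def gdiff_def)
  next
    case False
    then show ?thesis using h that mirror by (auto simp: lwins_second_def)
  qed
  show ?thesis unfolding dom_equiv_def
    using 1 h mirror by (auto simp: rwins_second_def lwins_second_def)
qed

end
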